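(* Let $\mathcal X$ be a proper CAT(0) cube complex on which $G$ acts properly and cocompactly. Let $Y_1,Y_2$ be convex subcomplexes of $\mathcal X$ and let $G_i=\mathrm{Stab}_G(Y_i)$, and suppose $G_i$ acts cocompactly on $Y_i$ for $i=1,2$. Then $G_1$ and $G_2$ are commensurable if and only if the $G_1$-essential core $\widehat{Y_1}$ and the $G_2$-essential core $\widehat{Y_2}$ are parallel.
   Context: Two convex subcomplexes are parallel if exactly the same hyperplanes intersect them. A hyperplane $H$ crossing a convex subcomplex $F$ is $G'$-essential (for $G'$ preserving $F$) if for any $0$-cube $x\in F$, each halfspace of $H$ contains points of $G'x$ arbitrarily far from $H$; $G'$ acts essentially on $F$ if every hyperplane crossing $F$ is $G'$-essential. If $G'$ acts cocompactly on $F$, the $G'$-essential core $\widehat F_{G'}$ is a $G'$-invariant convex subcomplex of $F$ at finite Hausdorff distance from $F$, crossed exactly by the hyperplanes essential in $F$, on which $G'$ acts essentially and cocompactly (Caprace–Sageev); it is well defined up to parallelism. Subgroups are commensurable if their intersection has finite index in each. *)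

theory Defs
  imports "HOL-Algebra.Coset"
begin

text \<open>A CAT(0) cube complex is modelled by its 1-skeleton, a median graph
 (Chepoi/Roller/Gerasimov). Vertices = 0-cubes = the whole type 'v,
 adjacency E. Convex subcomplexes = (nonempty) geodesically convex vertex sets;
 hyperplanes = Djokovic-Winkler classes of (oriented) edges; halfspaces =
 the sets W(a,b) of vertices closer to a than to b.\<close>

definition walk :: "('v \<Rightarrow> 'v \<Rightarrow> bool) \<Rightarrow> 'v list \<Rightarrow> bool" where
  "walk E p \<longleftrightarrow> p \<noteq> [] \<and> (\<forall>i. Suc i < length p \<longrightarrow> E (p ! i) (p ! Suc i))"

definition gconnected :: "('v \<Rightarrow> 'v \<Rightarrow> bool) \<Rightarrow> bool" where
  "gconnected E \<longleftrightarrow> (\<forall>x y. \<exists>p. walk E p \<and> hd p = x \<and> last p = y)"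

definition gdist :: "('v \<Rightarrow> 'v \<Rightarrow> bool) \<Rightarrow> 'v \<Rightarrow> 'v \<Rightarrow> nat" where
  "gdist E x y = (LEAST n. \<exists>p. walk E p \<and> hd p = x \<and> last p = y \<and> length p = Suc n)"

definition interval :: "('v \<Rightarrow> 'v \<Rightarrow> bool) \<Rightarrow> 'v \<Rightarrow> 'v \<Rightarrow> 'v set" where
  "interval E x y = {z. gdist E x z + gdist E z y = gdist E x y}"

definition median_graph :: "('v \<Rightarrow> 'v \<Rightarrow> bool) \<Rightarrow> bool" where
  "median_graph E \<longleftrightarrow> (\<forall>x y. E x y \<longrightarrow> E y x) \<and> (\<forall>x. \<not> E x x) \<and> gconnected E \<and>
     (\<forall>x y z. \<exists>!m. m \<in> interval E x y \<inter> interval E y z \<inter> interval E x z)"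

text \<open>Proper (locally finite) complex.\<close>
definition locally_finite :: "('v \<Rightarrow> 'v \<Rightarrow> bool) \<Rightarrow> bool" where
  "locally_finite E \<longleftrightarrow> (\<forall>x. finite {y. E x y})"

definition convex_sub :: "('v \<Rightarrow> 'v \<Rightarrow> bool) \<Rightarrow> 'v set \<Rightarrow> bool" where
  "convex_sub E S \<longleftrightarrow> S \<noteq> {} \<and> (\<forall>x\<in>S. \<forall>y\<in>S. interval E x y \<subseteq> S)"

text \<open>Djokovic-Winkler relation and hyperplanes (as sets of oriented edges).\<close>
definition Theta :: "('v \<Rightarrow> 'v \<Rightarrow> bool) \<Rightarrow> 'v \<times> 'v \<Rightarrow> 'v \<times> 'v \<Rightarrow> bool" where
  "Theta E e f = (case e of (a,b) \<Rightarrow> case f of (c,d) \<Rightarrow>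
      gdist E a c + gdist E b d \<noteq> gdist E a d + gdist E b c)"

definition hyp_of :: "('v \<Rightarrow> 'v \<Rightarrow> bool) \<Rightarrow> 'v \<Rightarrow> 'v \<Rightarrow> ('v \<times> 'v) set" where
  "hyp_of E a b = {(c,d). E c d \<and> Theta E (a,b) (c,d)}"

definition hyperplanes :: "('v \<Rightarrow> 'v \<Rightarrow> bool) \<Rightarrow> ('v \<times> 'v) set set" where
  "hyperplanes E = {hyp_of E a b | a b. E a b}"

definition halfspace :: "('v \<Rightarrow> 'v \<Rightarrow> bool) \<Rightarrow> 'v \<Rightarrow> 'v \<Rightarrow> 'v set" where
  "halfspace E a b = {x. gdist E x a < gdist E x b}"

definition crosses :: "('v \<times> 'v) set \<Rightarrow> 'v set \<Rightarrow> bool" where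
  "crosses H F \<longleftrightarrow> (\<exists>a b. (a,b) \<in> H \<and> a \<in> F \<and> b \<in> F)"

definition parallel :: "('v \<Rightarrow> 'v \<Rightarrow> bool) \<Rightarrow> 'v set \<Rightarrow> 'v set \<Rightarrow> bool" where
  "parallel E F1 F2 \<longleftrightarrow> (\<forall>H\<in>hyperplanes E. crosses H F1 \<longleftrightarrow> crosses H F2)"

text \<open>Distance from a vertex to a set of vertices (used for distance of a point
 of one halfspace from the hyperplane, measured as distance to the opposite halfspace).\<close>
definition setdist :: "('v \<Rightarrow> 'v \<Rightarrow> bool) \<Rightarrow> 'v \<Rightarrow> 'v set \<Rightarrow> nat" where
  "setdist E x S = (LEAST n. \<exists>y\<in>S. gdist E x y = n)"

definition graph_action :: "('g, 'm) monoid_scheme \<Rightarrow> ('v \<Rightarrow> 'v \<Rightarrow> bool) \<Rightarrow> ('g \<Rightarrow> 'v \<Rightarrow> 'v) \<Rightarrow> bool" where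
  "graph_action G E \<phi> \<longleftrightarrow> group G \<and> \<phi> \<one>\<^bsub>G\<^esub> = id \<and>
     (\<forall>g\<in>carrier G. \<forall>h\<in>carrier G. \<phi> (g \<otimes>\<^bsub>G\<^esub> h) = \<phi> g \<circ> \<phi> h) \<and>
     (\<forall>g\<in>carrier G. bij (\<phi> g) \<and> (\<forall>x y. E x y \<longleftrightarrow> E (\<phi> g x) (\<phi> g y)))"

text \<open>Proper action: for every finite set of vertices K (compact sets meet finitely
 many cubes of a locally finite complex), only finitely many g move K to meet K.\<close>
definition proper_action :: "('g, 'm) monoid_scheme \<Rightarrow> ('g \<Rightarrow> 'v \<Rightarrow> 'v) \<Rightarrow> bool" where
  "proper_action G \<phi> \<longleftrightarrow> (\<forall>K. finite K \<longrightarrow> finite {g\<in>carrier G. \<phi> g ` K \<inter> K \<noteq> {}})"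

text \<open>Cocompact action of the subgroup G' on the G'-invariant subcomplex F:
 finitely many G'-orbits of vertices of F (equivalent for locally finite complexes).\<close>
definition cocompact_on :: "'g set \<Rightarrow> ('g \<Rightarrow> 'v \<Rightarrow> 'v) \<Rightarrow> 'v set \<Rightarrow> bool" where
  "cocompact_on G' \<phi> F \<longleftrightarrow> (\<forall>g\<in>G'. \<phi> g ` F = F) \<and>
     (\<exists>K. finite K \<and> K \<subseteq> F \<and> F \<subseteq> (\<Union>g\<in>G'. \<phi> g ` K))"

definition Stab :: "('g, 'm) monoid_scheme \<Rightarrow> ('g \<Rightarrow> 'v \<Rightarrow> 'v) \<Rightarrow> 'v set \<Rightarrow> 'g set" where
  "Stab G \<phi> Y = {g\<in>carrier G. \<phi> g ` Y = Y}"

definition commensurable :: "('g, 'm) monoid_scheme \<Rightarrow> 'g set \<Rightarrow> 'g set \<Rightarrow> bool" where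
  "commensurable G H K \<longleftrightarrow>
     finite (rcosets\<^bsub>G\<lparr>carrier := H\<rparr>\<^esub> (H \<inter> K)) \<and>
     finite (rcosets\<^bsub>G\<lparr>carrier := K\<rparr>\<^esub> (H \<inter> K))"

text \<open>Since H contains both
 orientations of each of its edges, both halfspaces are covered.\<close>
definition essential_hyp :: "('v \<Rightarrow> 'v \<Rightarrow> bool) \<Rightarrow> 'g set \<Rightarrow> ('g \<Rightarrow> 'v \<Rightarrow> 'v) \<Rightarrow> 'v set
    \<Rightarrow> ('v \<times> 'v) set \<Rightarrow> bool" where
  "essential_hyp E G' \<phi> F H \<longleftrightarrow> crosses H F \<and>
     (\<forall>(a,b)\<in>H. \<forall>x\<in>F. \<forall>n::nat. \<exists>g\<in>G'. \<phi> g x \<in> halfspace E a b \<and>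
         n \<le> setdist E (\<phi> g x) (halfspace E b a))"

definition acts_essentially :: "('v \<Rightarrow> 'v \<Rightarrow> bool) \<Rightarrow> 'g set \<Rightarrow> ('g \<Rightarrow> 'v \<Rightarrow> 'v) \<Rightarrow> 'v set \<Rightarrow> bool" where
  "acts_essentially E G' \<phi> F \<longleftrightarrow>
     (\<forall>H\<in>hyperplanes E. crosses H F \<longrightarrow> essential_hyp E G' \<phi> F H)"

definition finite_hausdorff :: "('v \<Rightarrow> 'v \<Rightarrow> bool) \<Rightarrow> 'v set \<Rightarrow> 'v set \<Rightarrow> bool" where
  "finite_hausdorff E A B \<longleftrightarrow> (\<exists>r. (\<forall>x\<in>A. \<exists>y\<in>B. gdist E x y \<le> r) \<and> (\<forall>y\<in>B. \<exists>x\<in>A. gdist E x y \<le> r))"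

text \<open>Z is a G'-essential core of F (well defined up to parallelism).\<close>
definition essential_core :: "('v \<Rightarrow> 'v \<Rightarrow> bool) \<Rightarrow> 'g set \<Rightarrow> ('g \<Rightarrow> 'v \<Rightarrow> 'v) \<Rightarrow> 'v set \<Rightarrow> 'v set \<Rightarrow> bool" where
  "essential_core E G' \<phi> F Z \<longleftrightarrow> convex_sub E Z \<and> Z \<subseteq> F \<and> (\<forall>g\<in>G'. \<phi> g ` Z = Z) \<and>
     finite_hausdorff E Z F \<and>
     (\<forall>H\<in>hyperplanes E. crosses H Z \<longleftrightarrow> essential_hyp E G' \<phi> F H) \<and>
     acts_essentially E G' \<phi> Z \<and> cocompact_on G' \<phi> Z"

end

theory Submission
  imports Defs
begin

inductive reach :: "('v \<Rightarrow> 'v \<Rightarrow> bool) \<Rightarrow> nat \<Rightarrow> 'v \<Rightarrow> 'v \<Rightarrow> bool" for E where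
  r0: "reach E 0 x x"
| rS: "E x y \<Longrightarrow> reach E n y z \<Longrightarrow> reach E (Suc n) x z"

lemma walk_single: "walk E [x]"
  by (simp add: walk_def)

lemma walk_Cons2: "walk E (x # y # p) \<longleftrightarrow> E x y \<and> walk E (y # p)"
proof
  assume H: "walk E (x # y # p)"
  have "Suc 0 < length (x # y # p)" by simp
  then have "E ((x#y#p) ! 0) ((x#y#p) ! Suc 0)" using H unfolding walk_def by blast
  then have "E x y" by simp
  moreover have "walk E (y # p)" unfolding walk_def
  proof (intro conjI allI impI)
    fix i assume "Suc i < length (y # p)"
    then have "Suc (Suc i) < length (x # y # p)" by simp
    then have "E ((x#y#p) ! Suc i) ((x#y#p) ! Suc (Suc i))" using H unfolding walk_def by blast
    then show "E ((y # p) ! i) ((y # p) ! Suc i)" by simp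
  qed simp
  ultimately show "E x y \<and> walk E (y # p)" by blast
next
  assume H: "E x y \<and> walk E (y # p)"
  show "walk E (x # y # p)" unfolding walk_def
  proof (intro conjI allI impI)
    fix i assume i: "Suc i < length (x # y # p)"
    show "E ((x # y # p) ! i) ((x # y # p) ! Suc i)"
    proof (cases i)
      case 0 then show ?thesis using H by simp
    next
      case (Suc j)
      then have "Suc j < length (y # p)" using i by simp
      then have "E ((y#p) ! j) ((y#p) ! Suc j)" using H unfolding walk_def by blast
      then show ?thesis using Suc by simp
    qed
  qed simp
qed

lemma walk_reach: "walk E p \<Longrightarrow> reach E (length p - 1) (hd p) (last p)"
proof (induction p)
  case Nil then show ?case by (simp add: walk_def)
next
  case (Cons a p)
  show ?case
  proof (cases p)
    case Nil then show ?thesis by (simp add: reach.r0)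
  next
    case (Cons b q)
    have "E a b" "walk E (b # q)" using Cons.prems walk_Cons2[of E a b q] Cons by auto
    then have "reach E (length p - 1) b (last p)" using Cons.IH Cons by simp
    then have "reach E (Suc (length p - 1)) a (last p)" using \<open>E a b\<close> reach.rS by metis
    then show ?thesis using Cons by simp
  qed
qed

lemma reach_walk: "reach E n x y \<Longrightarrow> \<exists>p. walk E p \<and> hd p = x \<and> last p = y \<and> length p = Suc n"
proof (induction rule: reach.induct)
  case (r0 x) then show ?case using walk_single by fastforce
next
  case (rS x y n z)
  then obtain p where p: "walk E p" "hd p = y" "last p = z" "length p = Suc n" by blast
  then obtain q where q: "p = y # q" by (cases p) auto
  have "walk E (x # p)" using p q walk_Cons2[of E x y q] rS by simp
  then show ?case using p q by (intro exI[of _ "x # p"]) auto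
qed

lemma walk_iff_reach: "(\<exists>p. walk E p \<and> hd p = x \<and> last p = y \<and> length p = Suc n) \<longleftrightarrow> reach E n x y"
  using reach_walk walk_reach by fastforce

lemma gdist_reach_def: "gdist E x y = (LEAST n. reach E n x y)"
  unfolding gdist_def walk_iff_reach ..

lemma reach_trans: "reach E n x y \<Longrightarrow> reach E m y z \<Longrightarrow> reach E (n + m) x z"
  by (induction rule: reach.induct) (auto intro: reach.rS)

lemma reach_snoc: "reach E n x y \<Longrightarrow> E y z \<Longrightarrow> reach E (Suc n) x z"
  using reach_trans[of E n x y 1 z] by (simp add: reach.rS reach.r0)

lemma reach_sym: assumes "\<And>x y. E x y \<Longrightarrow> E y x" shows "reach E n x y \<Longrightarrow> reach E n y x"
  by (induction rule: reach.induct) (auto intro: reach.r0 reach_snoc assms)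

lemma reach0: "reach E 0 x y \<Longrightarrow> x = y"
  by (auto elim: reach.cases)

lemma reachSuc: "reach E (Suc n) x z \<Longrightarrow> \<exists>y. E x y \<and> reach E n y z"
  by (auto elim: reach.cases)

locale mg =
  fixes G :: "('g, 'm) monoid_scheme" and E :: "'v \<Rightarrow> 'v \<Rightarrow> bool" and \<phi> :: "'g \<Rightarrow> 'v \<Rightarrow> 'v"
  assumes med: "median_graph E" and act: "graph_action G E \<phi>"
begin

abbreviation d where "d \<equiv> gdist E"

lemma Esym: "E x y \<Longrightarrow> E y x" using med unfolding median_graph_def by blast
lemma Eirr: "\<not> E x x" using med unfolding median_graph_def by blast

lemma conn: "\<exists>n. reach E n x y"
  using med unfolding median_graph_def gconnected_def
  by (metis Suc_pred length_greater_0_conv walk_def walk_reach)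

lemma d_reach: "reach E (d x y) x y"
  unfolding gdist_reach_def using conn by (rule LeastI_ex)

lemma d_le: "reach E n x y \<Longrightarrow> d x y \<le> n"
  unfolding gdist_reach_def by (rule Least_le)

lemma d_refl[simp]: "d x x = 0"
  using d_le[OF reach.r0[of E x]] by simp

lemma d_zero: "d x y = 0 \<Longrightarrow> x = y"
  using d_reach[of x y] reach0 by metis

lemma rsym: assumes "reach E n x y" shows "reach E n y x"
  using reach_sym[of E n x y] Esym assms by blast

lemma d_sym: "d x y = d y x"
  using d_le[OF rsym[OF d_reach[of x y]]] d_le[OF rsym[OF d_reach[of y x]]] by simp

lemma d_tri: "d x z \<le> d x y + d y z"
  by (rule d_le[OF reach_trans[OF d_reach d_reach]])

lemma d_edge: "E x y \<Longrightarrow> d x y = 1"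
proof -
  assume e: "E x y"
  have "reach E 1 x y" using e reach.rS reach.r0 by fastforce
  then have "d x y \<le> 1" by (rule d_le)
  moreover have "d x y \<noteq> 0" using e Eirr d_zero by metis
  ultimately show ?thesis by simp
qed

lemma d_step: "d x z = Suc n \<Longrightarrow> \<exists>y. E x y \<and> d y z = n"
proof -
  assume h: "d x z = Suc n"
  then obtain y where y: "E x y" "reach E n y z" using d_reach[of x z] reachSuc by metis
  have "d y z \<le> n" using y d_le by blast
  moreover have "d x z \<le> d x y + d y z" by (rule d_tri)
  ultimately show ?thesis using y d_edge h by (intro exI[of _ y]) auto
qed

lemma interval_iff: "z \<in> interval E x y \<longleftrightarrow> d x z + d z y = d x y"
  by (simp add: interval_def)

lemma bip: assumes "E a b" shows "d x a \<noteq> d x b"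
proof -
  obtain m where m: "m \<in> interval E x a" "m \<in> interval E a b" "m \<in> interval E x b"
    using med unfolding median_graph_def by blast
  have ab: "d a b = 1" using assms d_edge by simp
  have "d a m + d m b = 1" using m(2) ab interval_iff by simp
  then have "d a m = 0 \<or> d m b = 0" by arith
  then have "m = a \<or> m = b" using d_zero by blast
  then show ?thesis
  proof
    assume "m = a" then have "d x a + 1 = d x b" using m(3) ab interval_iff by simp
    then show ?thesis by simp
  next
    assume "m = b" then have "d x b + 1 = d x a" using m(1) d_edge[OF Esym[OF assms]] interval_iff by simp
    then show ?thesis by simp
  qed
qed

lemma edge_le: "E a b \<Longrightarrow> d x b \<le> d x a + 1"
  using d_tri[of x b a] d_edge by simp

lemma half_cases: "E a b \<Longrightarrow> x \<in> halfspace E a b \<or> x \<in> halfspace E b a"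
  using bip[of a b x] by (auto simp: halfspace_def)

lemma half_plus: "E a b \<Longrightarrow> x \<in> halfspace E a b \<Longrightarrow> d x b = d x a + 1"
  using edge_le[of a b x] by (auto simp: halfspace_def)

lemma half_disj: "x \<in> halfspace E a b \<Longrightarrow> x \<notin> halfspace E b a"
  by (auto simp: halfspace_def)

lemma cross_lemma:
  assumes Y: "convex_sub E Y" and ab: "E a b"
  shows "p \<in> Y \<Longrightarrow> q \<in> Y \<Longrightarrow> p \<in> halfspace E a b \<Longrightarrow> q \<in> halfspace E b a \<Longrightarrow> crosses (hyp_of E a b) Y"
proof (induction "d p q" arbitrary: p)
  case 0
  then have "p = q" using d_zero by metis
  then show ?case using 0 half_disj by blast
next
  case (Suc k)
  obtain p' where p': "E p p'" "d p' q = k" using d_step Suc.hyps(2) by metis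
  have "p' \<in> interval E p q" using p' Suc.hyps(2) d_edge interval_iff by simp
  then have p'Y: "p' \<in> Y" using Y Suc.prems unfolding convex_sub_def by blast
  show ?case
  proof (cases "p' \<in> halfspace E b a")
    case True
    have 1: "d b p = d a p + 1" using half_plus[OF ab Suc.prems(3)] d_sym[of b p] d_sym[of a p] by simp
    have 2: "d a p' = d b p' + 1" using half_plus[OF Esym[OF ab] True] d_sym[of b p'] d_sym[of a p'] by simp
    have "Theta E (a, b) (p, p')" unfolding Theta_def using 1 2 by simp
    then have "(p, p') \<in> hyp_of E a b" using p' by (simp add: hyp_of_def)
    then show ?thesis unfolding crosses_def using Suc.prems p'Y by blast
  next
    case False
    then have "p' \<in> halfspace E a b" using half_cases ab by blast
    then show ?thesis using Suc.hyps(1)[of p'] p' p'Y Suc.prems by simp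
  qed
qed

end

context mg begin

lemma grp: "group G" using act unfolding graph_action_def by blast
lemma phi_one: "\<phi> \<one>\<^bsub>G\<^esub> = id" using act unfolding graph_action_def by blast
lemma phi_mult: "g \<in> carrier G \<Longrightarrow> h \<in> carrier G \<Longrightarrow> \<phi> (g \<otimes>\<^bsub>G\<^esub> h) = \<phi> g \<circ> \<phi> h"
  using act unfolding graph_action_def by blast
lemma phi_E: "g \<in> carrier G \<Longrightarrow> E x y \<longleftrightarrow> E (\<phi> g x) (\<phi> g y)"
  using act unfolding graph_action_def by blast

lemma phi_inv1: "g \<in> carrier G \<Longrightarrow> \<phi> (inv\<^bsub>G\<^esub> g) (\<phi> g x) = x"
proof -
  assume g: "g \<in> carrier G"
  have "\<phi> (inv\<^bsub>G\<^esub> g \<otimes>\<^bsub>G\<^esub> g) = \<phi> \<one>\<^bsub>G\<^esub>" using g group.l_inv[OF grp] by simp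
  then show ?thesis using phi_mult[of "inv\<^bsub>G\<^esub> g" g] g group.inv_closed[OF grp] phi_one
    by (metis comp_apply id_apply)
qed

lemma phi_inv2: "g \<in> carrier G \<Longrightarrow> \<phi> g (\<phi> (inv\<^bsub>G\<^esub> g) x) = x"
proof -
  assume g: "g \<in> carrier G"
  have "\<phi> (g \<otimes>\<^bsub>G\<^esub> inv\<^bsub>G\<^esub> g) = \<phi> \<one>\<^bsub>G\<^esub>" using g group.r_inv[OF grp] by simp
  then show ?thesis using phi_mult[of g "inv\<^bsub>G\<^esub> g"] g group.inv_closed[OF grp] phi_one
    by (metis comp_apply id_apply)
qed

lemma reach_map: "g \<in> carrier G \<Longrightarrow> reach E n x y \<Longrightarrow> reach E n (\<phi> g x) (\<phi> g y)"
proof -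
  assume g: "g \<in> carrier G"
  show "reach E n x y \<Longrightarrow> reach E n (\<phi> g x) (\<phi> g y)"
  proof (induction rule: reach.induct)
    case (r0 x) show ?case by (rule reach.r0)
  next
    case (rS x y n z)
    have "E (\<phi> g x) (\<phi> g y)" using rS(1) phi_E[OF g] by blast
    then show ?case using rS(3) by (rule reach.rS)
  qed
qed

lemma d_phi_le: "g \<in> carrier G \<Longrightarrow> d (\<phi> g x) (\<phi> g y) \<le> d x y"
  using reach_map d_reach d_le by blast

lemma d_phi[simp]: "g \<in> carrier G \<Longrightarrow> d (\<phi> g x) (\<phi> g y) = d x y"
proof -
  assume g: "g \<in> carrier G"
  have "d (\<phi> (inv\<^bsub>G\<^esub> g) (\<phi> g x)) (\<phi> (inv\<^bsub>G\<^esub> g) (\<phi> g y)) \<le> d (\<phi> g x) (\<phi> g y)"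
    using d_phi_le group.inv_closed[OF grp g] by blast
  then show ?thesis using d_phi_le[OF g, of x y] phi_inv1[OF g] by simp
qed

lemma Stab_subgroup: "subgroup (Stab G \<phi> Y) G"
proof (rule group.subgroupI[OF grp])
  show "Stab G \<phi> Y \<subseteq> carrier G" by (auto simp: Stab_def)
  show "Stab G \<phi> Y \<noteq> {}" using phi_one monoid.one_closed[OF group.is_monoid[OF grp]] by (auto simp: Stab_def)
next
  fix a assume a: "a \<in> Stab G \<phi> Y"
  then have ac: "a \<in> carrier G" and aY: "\<phi> a ` Y = Y" by (auto simp: Stab_def)
  have "\<phi> (inv\<^bsub>G\<^esub> a) ` Y = \<phi> (inv\<^bsub>G\<^esub> a) ` \<phi> a ` Y" using aY by simp
  also have "\<dots> = Y" using phi_inv1[OF ac] by (simp add: image_image)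
  finally show "inv\<^bsub>G\<^esub> a \<in> Stab G \<phi> Y" using group.inv_closed[OF grp ac] by (simp add: Stab_def)
next
  fix a b assume "a \<in> Stab G \<phi> Y" "b \<in> Stab G \<phi> Y"
  then have ac: "a \<in> carrier G" "\<phi> a ` Y = Y" and bc: "b \<in> carrier G" "\<phi> b ` Y = Y" by (auto simp: Stab_def)
  have "\<phi> (a \<otimes>\<^bsub>G\<^esub> b) ` Y = \<phi> a ` (\<phi> b ` Y)" using phi_mult[OF ac(1) bc(1)] by (simp add: image_image)
  also have "\<dots> = Y" using ac bc by simp
  finally show "a \<otimes>\<^bsub>G\<^esub> b \<in> Stab G \<phi> Y" using monoid.m_closed[OF group.is_monoid[OF grp] ac(1) bc(1)]
    by (simp add: Stab_def)
qed

lemma setdist_ex: "S \<noteq> {} \<Longrightarrow> \<exists>y\<in>S. d x y = setdist E x S"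
  unfolding setdist_def by (rule LeastI_ex) blast

lemma setdist_le: "y \<in> S \<Longrightarrow> setdist E x S \<le> d x y"
  unfolding setdist_def by (rule Least_le) blast

lemma setdist_tri: "S \<noteq> {} \<Longrightarrow> setdist E x S \<le> d x y + setdist E y S"
proof -
  assume "S \<noteq> {}"
  then obtain w where w: "w \<in> S" "d y w = setdist E y S" using setdist_ex by blast
  have "setdist E x S \<le> d x w" using w(1) by (rule setdist_le)
  also have "\<dots> \<le> d x y + d y w" by (rule d_tri)
  finally show ?thesis using w(2) by simp
qed

lemma setdist_mem: "x \<in> S \<Longrightarrow> setdist E x S = 0"
  using setdist_le[of x S x] by simp

lemma half_ne: "halfspace E b a \<noteq> {}" if "E a b"
  using that d_edge Esym by (auto simp: halfspace_def intro!: exI[of _ b])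

lemma transfer:
  assumes x: "x \<in> Y1" and Y2: "convex_sub E Y2"
    and coarse: "\<And>y. \<exists>R. \<forall>g1\<in>S1. \<exists>g2\<in>S2. d (\<phi> g2 y) (\<phi> g1 x) \<le> R"
    and stab: "\<forall>g\<in>S2. \<phi> g ` Y2 = Y2"
    and H: "H \<in> hyperplanes E" and ess: "essential_hyp E S1 \<phi> Y1 H"
  shows "essential_hyp E S2 \<phi> Y2 H"
proof -
  have main: "\<exists>g\<in>S2. \<phi> g y \<in> halfspace E a b \<and> n \<le> setdist E (\<phi> g y) (halfspace E b a)"
    if ab: "(a, b) \<in> H" and y: "y \<in> Y2" for a b y n
  proof -
    have Eab: "E a b" using ab H by (auto simp: hyperplanes_def hyp_of_def)
    obtain R where R: "\<forall>g1\<in>S1. \<exists>g2\<in>S2. d (\<phi> g2 y) (\<phi> g1 x) \<le> R" using coarse by blast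
    obtain g1 where g1: "g1 \<in> S1" "\<phi> g1 x \<in> halfspace E a b" "n + R + 1 \<le> setdist E (\<phi> g1 x) (halfspace E b a)"
      using ess ab x unfolding essential_hyp_def by fast
    obtain g2 where g2: "g2 \<in> S2" "d (\<phi> g2 y) (\<phi> g1 x) \<le> R" using R g1 by blast
    have "setdist E (\<phi> g1 x) (halfspace E b a) \<le> d (\<phi> g1 x) (\<phi> g2 y) + setdist E (\<phi> g2 y) (halfspace E b a)"
      using setdist_tri half_ne[OF Eab] by blast
    then have sd: "n + 1 \<le> setdist E (\<phi> g2 y) (halfspace E b a)" using g1(3) g2(2) d_sym[of "\<phi> g1 x" "\<phi> g2 y"] by linarith
    then have "\<phi> g2 y \<notin> halfspace E b a" using setdist_mem by fastforce
    then have "\<phi> g2 y \<in> halfspace E a b" using half_cases[OF Eab] by blast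
    then show ?thesis using g2 sd by (intro bexI[of _ g2]) auto
  qed
  obtain a0 b0 where H0: "H = hyp_of E a0 b0" "E a0 b0" using H by (auto simp: hyperplanes_def)
  have in1: "(a0, b0) \<in> H" using H0 by (simp add: hyp_of_def Theta_def d_edge)
  have in2: "(b0, a0) \<in> H" using H0 Esym by (simp add: hyp_of_def Theta_def d_edge d_sym)
  obtain y where y: "y \<in> Y2" using Y2 unfolding convex_sub_def by blast
  obtain g where g: "g \<in> S2" "\<phi> g y \<in> halfspace E a0 b0" using main[OF in1 y, of 0] by blast
  obtain g' where g': "g' \<in> S2" "\<phi> g' y \<in> halfspace E b0 a0" using main[OF in2 y, of 0] by blast
  have "\<phi> g y \<in> Y2" "\<phi> g' y \<in> Y2" using g g' stab y by blast+
  then have "crosses H Y2" using cross_lemma[OF Y2 H0(2)] g g' H0 by blast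
  then show ?thesis unfolding essential_hyp_def using main by blast
qed

end

context mg begin

lemma rcoset_upd: "r_coset (G\<lparr>carrier := S\<rparr>) K a = r_coset G K a"
  by (simp add: r_coset_def)

lemma coarse:
  fixes Y1 Y2
  defines "S1 \<equiv> Stab G \<phi> Y1" and "S2 \<equiv> Stab G \<phi> Y2"
  assumes fin: "finite (rcosets\<^bsub>G\<lparr>carrier := S1\<rparr>\<^esub> (S1 \<inter> S2))"
  shows "\<exists>R. \<forall>g1\<in>S1. \<exists>g2\<in>S2. d (\<phi> g2 y) (\<phi> g1 x) \<le> R"
proof -
  let ?K = "S1 \<inter> S2"
  let ?C = "rcosets\<^bsub>G\<lparr>carrier := S1\<rparr>\<^esub> ?K"
  define rep where "rep c = (SOME h. h \<in> c)" for c :: "'g set"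
  define R where "R = Max ((\<lambda>c. d y (\<phi> (rep c) x)) ` ?C)"
  have sgK: "subgroup ?K G" using group.subgroups_Inter_pair[OF grp Stab_subgroup Stab_subgroup] S1_def S2_def by simp
  have S1c: "S1 \<subseteq> carrier G" "S2 \<subseteq> carrier G" by (auto simp: S1_def S2_def Stab_def)
  show ?thesis
  proof (intro exI[of _ R] ballI)
    fix g1 assume g1: "g1 \<in> S1"
    let ?c = "?K #>\<^bsub>G\<^esub> g1"
    have cC: "?c \<in> ?C" using g1 unfolding RCOSETS_def rcoset_upd by auto
    have "g1 \<in> ?c" using group.rcos_self[OF grp _ sgK] g1 S1c by blast
    then have "rep ?c \<in> ?c" unfolding rep_def by (rule someI)
    then obtain k where k: "k \<in> ?K" "rep ?c = k \<otimes>\<^bsub>G\<^esub> g1" unfolding r_coset_def by blast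
    have kc: "k \<in> carrier G" using k S1c by blast
    have g1c: "g1 \<in> carrier G" using g1 S1c by blast
    have eq: "g1 = inv\<^bsub>G\<^esub> k \<otimes>\<^bsub>G\<^esub> rep ?c"
    proof -
      have ikc: "inv\<^bsub>G\<^esub> k \<in> carrier G" using group.inv_closed[OF grp kc] .
      have "inv\<^bsub>G\<^esub> k \<otimes>\<^bsub>G\<^esub> rep ?c = inv\<^bsub>G\<^esub> k \<otimes>\<^bsub>G\<^esub> (k \<otimes>\<^bsub>G\<^esub> g1)" using k(2) by simp
      also have "\<dots> = (inv\<^bsub>G\<^esub> k \<otimes>\<^bsub>G\<^esub> k) \<otimes>\<^bsub>G\<^esub> g1"
        using group.is_monoid[OF grp] ikc kc g1c by (simp add: monoid.m_assoc)
      also have "\<dots> = g1" using group.l_inv[OF grp kc] g1c group.is_monoid[OF grp] by (simp add: monoid.l_one)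
      finally show ?thesis by simp
    qed
    have ik: "inv\<^bsub>G\<^esub> k \<in> S2" using subgroup.m_inv_closed[OF Stab_subgroup] k unfolding S2_def by blast
    have repc: "rep ?c \<in> carrier G" using k kc g1c monoid.m_closed[OF group.is_monoid[OF grp]] by simp
    have "\<phi> g1 x = \<phi> (inv\<^bsub>G\<^esub> k) (\<phi> (rep ?c) x)"
      using eq phi_mult[OF group.inv_closed[OF grp kc] repc] by (metis comp_apply)
    then have "d (\<phi> (inv\<^bsub>G\<^esub> k) y) (\<phi> g1 x) = d y (\<phi> (rep ?c) x)"
      using group.inv_closed[OF grp kc] by simp
    also have "\<dots> \<le> R" unfolding R_def by (rule Max_ge[OF finite_imageI[OF fin] imageI[OF cC]])
    finally show "\<exists>g2\<in>S2. d (\<phi> g2 y) (\<phi> g1 x) \<le> R" using ik by blast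
  qed
qed

end

context mg begin

lemma geo_w:
  assumes "d z w + d w y = d z y" "d z c = d z y + d y c"
  shows "d w c = d w y + d y c"
proof -
  have "d z c \<le> d z w + d w c" by (rule d_tri)
  moreover have "d w c \<le> d w y + d y c" by (rule d_tri)
  ultimately show ?thesis using assms by linarith
qed

lemma bound:
  assumes Z1: "convex_sub E Z1" and Z2: "convex_sub E Z2" and par: "parallel E Z1 Z2"
    and z0: "z0 \<in> Z1" and y0: "y0 \<in> Z2" and z: "z \<in> Z1"
  shows "\<exists>y\<in>Z2. d z y \<le> d z0 y0"
proof -
  define m where "m = (LEAST n. \<exists>y\<in>Z2. d z y = n)"
  have "\<exists>y\<in>Z2. d z y = m" unfolding m_def by (rule LeastI_ex) (use y0 in blast)
  then obtain y where y: "y \<in> Z2" "d z y = m" by blast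
  have mmin: "m \<le> d z c" if "c \<in> Z2" for c unfolding m_def using that by (intro Least_le) blast
  have gate: "d z c = d z y + d y c" if c: "c \<in> Z2" for c
  proof -
    obtain m' where m': "m' \<in> interval E z y" "m' \<in> interval E y c" "m' \<in> interval E z c"
      using med unfolding median_graph_def by blast
    have "m' \<in> Z2" using m'(2) Z2 y c unfolding convex_sub_def by blast
    then have "m \<le> d z m'" by (rule mmin)
    moreover have "d z m' + d m' y = d z y" using m'(1) interval_iff by simp
    ultimately have "d m' y = 0" using y by simp
    then have "m' = y" using d_zero by blast
    then show ?thesis using m'(3) interval_iff by simp
  qed
  have key: "\<And>u. d z u + d u y = d z y \<Longrightarrow> d u y = n \<Longrightarrow> d z0 y = d z0 u + n \<and> d y0 u = d y0 y + n" for n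
  proof (induction n)
    case 0
    then have "u = y" using d_zero by blast
    then show ?case by simp
  next
    case (Suc n)
    obtain u' where u': "E u u'" "d u' y = n" using d_step Suc.prems(2) by blast
    have "d z u' \<le> d z u + 1" using edge_le[OF u'(1)] by simp
    moreover have "d z y \<le> d z u' + d u' y" by (rule d_tri)
    ultimately have geo': "d z u' + d u' y = d z y" using Suc.prems u' by linarith
    have zu': "d z u' = d z u + 1" using geo' Suc.prems u' by linarith
    have nc2: "\<not> crosses (hyp_of E u u') Z2"
    proof
      assume "crosses (hyp_of E u u') Z2"
      then obtain c c' where cc: "(c, c') \<in> hyp_of E u u'" "c \<in> Z2" "c' \<in> Z2" unfolding crosses_def by blast
      have 1: "d u c = d u y + d y c" using geo_w[OF Suc.prems(1) gate[OF cc(2)]] .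
      have 2: "d u c' = d u y + d y c'" using geo_w[OF Suc.prems(1) gate[OF cc(3)]] .
      have 3: "d u' c = d u' y + d y c" using geo_w[OF geo' gate[OF cc(2)]] .
      have 4: "d u' c' = d u' y + d y c'" using geo_w[OF geo' gate[OF cc(3)]] .
      have "Theta E (u, u') (c, c')" using cc(1) by (simp add: hyp_of_def)
      then show False using 1 2 3 4 by (simp add: Theta_def)
    qed
    have Hh: "hyp_of E u u' \<in> hyperplanes E" using u'(1) by (auto simp: hyperplanes_def)
    have nc1: "\<not> crosses (hyp_of E u u') Z1" using nc2 par Hh unfolding parallel_def by blast
    have zW: "z \<in> halfspace E u u'" using zu' by (simp add: halfspace_def)
    have z0W: "z0 \<in> halfspace E u u'"
    proof (rule ccontr)
      assume "z0 \<notin> halfspace E u u'"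
      then have "z0 \<in> halfspace E u' u" using half_cases[OF u'(1)] by blast
      then show False using cross_lemma[OF Z1 u'(1) z z0 zW] nc1 by blast
    qed
    have yW: "y \<in> halfspace E u' u" using u'(2) Suc.prems(2) d_sym[of y u] d_sym[of y u'] by (simp add: halfspace_def)
    have y0W: "y0 \<in> halfspace E u' u"
    proof (rule ccontr)
      assume "y0 \<notin> halfspace E u' u"
      then have "y0 \<in> halfspace E u u'" using half_cases[OF u'(1)] by blast
      then show False using cross_lemma[OF Z2 u'(1) y0 y(1) _ yW] nc2 by blast
    qed
    have a: "d z0 u' = d z0 u + 1" using half_plus[OF u'(1) z0W] .
    have b: "d y0 u = d y0 u' + 1" using half_plus[OF Esym[OF u'(1)] y0W] .
    have "d z0 y = d z0 u' + n \<and> d y0 u' = d y0 y + n" using Suc.IH[OF geo' u'(2)] .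
    then show ?case using a b by simp
  qed
  have k: "d z0 y = d z0 z + m \<and> d y0 z = d y0 y + m" using key[of z m] y by simp
  have "d z0 y \<le> d z0 y0 + d y0 y" by (rule d_tri)
  moreover have "d y0 z \<le> d y0 z0 + d z0 z" by (rule d_tri)
  ultimately have "m \<le> d z0 y0" using k d_sym[of y0 z0] by linarith
  then show ?thesis using y by blast
qed

end

lemma (in group) aux_cancel:
  assumes "a \<in> carrier G" "b \<in> carrier G" "f \<in> carrier G"
  shows "(a \<otimes> f) \<otimes> inv (b \<otimes> f) = a \<otimes> inv b"
proof -
  have 1: "inv (b \<otimes> f) = inv f \<otimes> inv b" using assms by (simp add: inv_mult_group)
  have 2: "f \<otimes> (inv f \<otimes> inv b) = inv b" using assms by (simp add: m_assoc[symmetric])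
  have "(a \<otimes> f) \<otimes> inv (b \<otimes> f) = a \<otimes> (f \<otimes> (inv f \<otimes> inv b))"
    using assms 1 by (simp add: m_assoc)
  then show ?thesis using 2 by simp
qed

lemma (in group) aux_cancel2:
  assumes "a \<in> carrier G" "b \<in> carrier G"
  shows "a \<otimes> (inv a \<otimes> b) = b"
  using assms by (simp add: m_assoc[symmetric])

context mg begin

lemma ball_finite:
  assumes lf: "locally_finite E"
  shows "finite {v. d k v \<le> R}"
proof (induction R)
  case 0
  have "{v. d k v \<le> 0} = {k}" using d_zero by auto
  then show ?case by simp
next
  case (Suc R)
  have "{v. d k v \<le> Suc R} \<subseteq> {v. d k v \<le> R} \<union> (\<Union>u\<in>{v. d k v \<le> R}. {w. E u w})"
  proof
    fix v assume "v \<in> {v. d k v \<le> Suc R}"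
    then have "d k v \<le> R \<or> d v k = Suc R" using d_sym by (auto simp: le_Suc_eq)
    then show "v \<in> {v. d k v \<le> R} \<union> (\<Union>u\<in>{v. d k v \<le> R}. {w. E u w})"
    proof
      assume "d v k = Suc R"
      then obtain u where u: "E v u" "d u k = R" using d_step by blast
      have "d k u \<le> R" using u(2) d_sym[of k u] by simp
      moreover have "E u v" using Esym[OF u(1)] .
      ultimately show ?thesis by blast
    qed simp
  qed
  moreover have "finite ({v. d k v \<le> R} \<union> (\<Union>u\<in>{v. d k v \<le> R}. {w. E u w}))"
    using Suc lf unfolding locally_finite_def by blast
  ultimately show ?case by (rule finite_subset)
qed

lemma finidx:
  fixes Y1 Y2 Z1 Z2
  defines "S1 \<equiv> Stab G \<phi> Y1" and "S2 \<equiv> Stab G \<phi> Y2"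
  assumes lf: "locally_finite E" and pr: "proper_action G \<phi>"
    and Z1: "convex_sub E Z1" and Z2: "convex_sub E Z2" and par: "parallel E Z1 Z2"
    and st1: "\<forall>g\<in>S1. \<phi> g ` Z1 = Z1" and cc2: "cocompact_on S2 \<phi> Z2"
  shows "finite (rcosets\<^bsub>G\<lparr>carrier := S1\<rparr>\<^esub> (S1 \<inter> S2))"
proof -
  let ?K = "S1 \<inter> S2"
  have sgK: "subgroup ?K G" using group.subgroups_Inter_pair[OF grp Stab_subgroup Stab_subgroup] S1_def S2_def by simp
  have S1c: "S1 \<subseteq> carrier G" "S2 \<subseteq> carrier G" by (auto simp: S1_def S2_def Stab_def)
  have sg2: "subgroup S2 G" unfolding S2_def by (rule Stab_subgroup)
  obtain x0 where x0: "x0 \<in> Z1" using Z1 unfolding convex_sub_def by blast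
  obtain y0 where y0: "y0 \<in> Z2" using Z2 unfolding convex_sub_def by blast
  define D where "D = d x0 y0"
  obtain K2 where K2: "finite K2" "K2 \<subseteq> Z2" "Z2 \<subseteq> (\<Union>g\<in>S2. \<phi> g ` K2)"
    using cc2 unfolding cocompact_on_def by blast
  define B where "B = (\<Union>k\<in>K2. {v. d k v \<le> D}) \<union> {x0}"
  have finB: "finite B" unfolding B_def using K2(1) ball_finite[OF lf] by blast
  define F where "F = {g\<in>carrier G. \<phi> g ` B \<inter> B \<noteq> {}}"
  have finF: "finite F" unfolding F_def using pr finB unfolding proper_action_def by blast
  have claim: "\<exists>g2\<in>S2. \<exists>f\<in>F. g1 = g2 \<otimes>\<^bsub>G\<^esub> f" if g1: "g1 \<in> S1" for g1
  proof -
    have g1c: "g1 \<in> carrier G" using g1 S1c by blast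
    have "\<phi> g1 x0 \<in> Z1" using st1 g1 x0 by blast
    then obtain y where y: "y \<in> Z2" "d (\<phi> g1 x0) y \<le> D" using bound[OF Z1 Z2 par x0 y0] D_def by blast
    then obtain g2 k where g2: "g2 \<in> S2" "k \<in> K2" "y = \<phi> g2 k" using K2(3) by blast
    have g2c: "g2 \<in> carrier G" using g2 S1c by blast
    have ig2: "inv\<^bsub>G\<^esub> g2 \<in> carrier G" using group.inv_closed[OF grp g2c] .
    define f where "f = inv\<^bsub>G\<^esub> g2 \<otimes>\<^bsub>G\<^esub> g1"
    have fc: "f \<in> carrier G" unfolding f_def using ig2 g1c monoid.m_closed[OF group.is_monoid[OF grp]] by blast
    have fx: "\<phi> f x0 = \<phi> (inv\<^bsub>G\<^esub> g2) (\<phi> g1 x0)" unfolding f_def using phi_mult[OF ig2 g1c] by simp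
    have "d k (\<phi> f x0) = d (\<phi> g2 k) (\<phi> g2 (\<phi> f x0))" using g2c by simp
    also have "\<dots> = d y (\<phi> g1 x0)" using fx phi_inv2[OF g2c] g2 by simp
    also have "\<dots> \<le> D" using y(2) d_sym[of y "\<phi> g1 x0"] by simp
    finally have "\<phi> f x0 \<in> B" unfolding B_def using g2 by blast
    moreover have "x0 \<in> B" unfolding B_def by blast
    ultimately have "f \<in> F" unfolding F_def using fc by blast
    moreover have "g1 = g2 \<otimes>\<^bsub>G\<^esub> f" unfolding f_def using group.aux_cancel2[OF grp g2c g1c] by simp
    ultimately show ?thesis using g2 by blast
  qed
  define h where "h f = (SOME g1. g1 \<in> S1 \<and> (\<exists>g2\<in>S2. g1 = g2 \<otimes>\<^bsub>G\<^esub> f))" for f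
  have "rcosets\<^bsub>G\<lparr>carrier := S1\<rparr>\<^esub> ?K \<subseteq> (\<lambda>f. ?K #>\<^bsub>G\<^esub> h f) ` F"
  proof
    fix c assume "c \<in> rcosets\<^bsub>G\<lparr>carrier := S1\<rparr>\<^esub> ?K"
    then obtain g1 where g1: "g1 \<in> S1" "c = ?K #>\<^bsub>G\<^esub> g1" unfolding RCOSETS_def rcoset_upd by auto
    obtain g2 f where gf: "g2 \<in> S2" "f \<in> F" "g1 = g2 \<otimes>\<^bsub>G\<^esub> f" using claim[OF g1(1)] by blast
    have "h f \<in> S1 \<and> (\<exists>g2\<in>S2. h f = g2 \<otimes>\<^bsub>G\<^esub> f)" unfolding h_def
      by (rule someI[of _ g1]) (use g1 gf in blast)
    then obtain g2' where hf: "h f \<in> S1" "g2' \<in> S2" "h f = g2' \<otimes>\<^bsub>G\<^esub> f" by blast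
    have fc: "f \<in> carrier G" using gf F_def by blast
    have g2c: "g2 \<in> carrier G" "g2' \<in> carrier G" using gf hf S1c by auto
    have "g1 \<otimes>\<^bsub>G\<^esub> inv\<^bsub>G\<^esub> (h f) = g2 \<otimes>\<^bsub>G\<^esub> inv\<^bsub>G\<^esub> g2'"
      using gf(3) hf(3) group.aux_cancel[OF grp g2c fc] by simp
    also have "\<dots> \<in> S2" using sg2 gf hf by (simp add: subgroup.m_closed subgroup.m_inv_closed)
    finally have in2: "g1 \<otimes>\<^bsub>G\<^esub> inv\<^bsub>G\<^esub> (h f) \<in> S2" .
    have in1: "g1 \<otimes>\<^bsub>G\<^esub> inv\<^bsub>G\<^esub> (h f) \<in> S1"
      using Stab_subgroup[of Y1] g1 hf unfolding S1_def by (simp add: subgroup.m_closed subgroup.m_inv_closed)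
    have hfc: "h f \<in> carrier G" "g1 \<in> carrier G" using hf g1 S1c by auto
    have "g1 \<in> ?K #>\<^bsub>G\<^esub> h f" using subgroup.rcos_module_rev[OF sgK grp hfc(1) hfc(2)] in1 in2 by blast
    then have "?K #>\<^bsub>G\<^esub> h f = ?K #>\<^bsub>G\<^esub> g1" using group.repr_independence[OF grp _ hfc(1) sgK] by blast
    then show "c \<in> (\<lambda>f. ?K #>\<^bsub>G\<^esub> h f) ` F" using g1 gf by auto
  qed
  then show ?thesis using finF finite_surj by blast
qed

end

theorem mainTheorem6:
  fixes G :: "'g monoid" and E :: "'v \<Rightarrow> 'v \<Rightarrow> bool" and \<phi> :: "'g \<Rightarrow> 'v \<Rightarrow> 'v"
    and Y1 Y2 Z1 Z2 :: "'v set"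
  assumes "median_graph E" and "locally_finite E"
    and "graph_action G E \<phi>" and "proper_action G \<phi>" and "cocompact_on (carrier G) \<phi> UNIV"
    and "convex_sub E Y1" and "convex_sub E Y2"
    and "cocompact_on (Stab G \<phi> Y1) \<phi> Y1" and "cocompact_on (Stab G \<phi> Y2) \<phi> Y2"
    and "essential_core E (Stab G \<phi> Y1) \<phi> Y1 Z1"
    and "essential_core E (Stab G \<phi> Y2) \<phi> Y2 Z2"
  shows "commensurable G (Stab G \<phi> Y1) (Stab G \<phi> Y2) \<longleftrightarrow> parallel E Z1 Z2"
proof -
  interpret mg G E \<phi> using assms(1,3) by unfold_locales
  let ?S1 = "Stab G \<phi> Y1" and ?S2 = "Stab G \<phi> Y2"
  have c1: "convex_sub E Z1" "\<forall>g\<in>?S1. \<phi> g ` Z1 = Z1" "cocompact_on ?S1 \<phi> Z1"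
    "\<forall>H\<in>hyperplanes E. crosses H Z1 \<longleftrightarrow> essential_hyp E ?S1 \<phi> Y1 H"
    using assms(10) unfolding essential_core_def by blast+
  have c2: "convex_sub E Z2" "\<forall>g\<in>?S2. \<phi> g ` Z2 = Z2" "cocompact_on ?S2 \<phi> Z2"
    "\<forall>H\<in>hyperplanes E. crosses H Z2 \<longleftrightarrow> essential_hyp E ?S2 \<phi> Y2 H"
    using assms(11) unfolding essential_core_def by blast+
  have st1: "\<forall>g\<in>?S1. \<phi> g ` Y1 = Y1" and st2: "\<forall>g\<in>?S2. \<phi> g ` Y2 = Y2" by (auto simp: Stab_def)
  obtain x1 where x1: "x1 \<in> Y1" using assms(6) unfolding convex_sub_def by blast
  obtain x2 where x2: "x2 \<in> Y2" using assms(7) unfolding convex_sub_def by blast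
  show ?thesis
  proof
    assume com: "commensurable G ?S1 ?S2"
    have f1: "finite (rcosets\<^bsub>G\<lparr>carrier := ?S1\<rparr>\<^esub> (?S1 \<inter> ?S2))"
      and f2: "finite (rcosets\<^bsub>G\<lparr>carrier := ?S2\<rparr>\<^esub> (?S2 \<inter> ?S1))"
      using com unfolding commensurable_def by (auto simp: Int_commute)
    show "parallel E Z1 Z2" unfolding parallel_def
    proof
      fix H assume H: "H \<in> hyperplanes E"
      have "essential_hyp E ?S1 \<phi> Y1 H \<Longrightarrow> essential_hyp E ?S2 \<phi> Y2 H"
        using transfer[OF x1 assms(7) coarse[OF f1] st2 H] by blast
      moreover have "essential_hyp E ?S2 \<phi> Y2 H \<Longrightarrow> essential_hyp E ?S1 \<phi> Y1 H"
        using transfer[OF x2 assms(6) coarse[OF f2] st1 H] by blast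
      ultimately show "crosses H Z1 \<longleftrightarrow> crosses H Z2" using c1(4) c2(4) H by blast
    qed
  next
    assume par: "parallel E Z1 Z2"
    have par': "parallel E Z2 Z1" using par unfolding parallel_def by blast
    have "finite (rcosets\<^bsub>G\<lparr>carrier := ?S1\<rparr>\<^esub> (?S1 \<inter> ?S2))"
      using finidx[OF assms(2) assms(4) c1(1) c2(1) par c1(2) c2(3)] .
    moreover have "finite (rcosets\<^bsub>G\<lparr>carrier := ?S2\<rparr>\<^esub> (?S2 \<inter> ?S1))"
      using finidx[OF assms(2) assms(4) c2(1) c1(1) par' c2(2) c1(3)] .
    ultimately show "commensurable G ?S1 ?S2" unfolding commensurable_def by (simp add: Int_commute)
  qed
qed

end
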